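(* Let $\mathbf a$ be a mask whose linear scheme $\widetilde S$ is convergent, with refinable function $\varphi$, and let $p\in[1,\infty)$ and $\ell\in\mathbb Z^s$. Then the characteristic Markov chain $(X_n^{\mathbf a})$ with deterministic initial condition $X_0^{\mathbf a}=\ell$ converges in $L^p(\Omega,\mathbb P_\ell;\mathbb R^s)$ if and only if the scheme is interpolatory, i.e. there is $k\in\mathbb Z^s$ with $\varphi(j)=\delta_{kj}$ for all $j\in\mathbb Z^s$. In this case the $L^p$-limit is a constant lattice point.
   Context: Mask: finitely supported nonnegative $(a_i)_{i\in\mathbb Z^s}$ with $\sum_ja_{i-2j}=1$ for all $i$. Linear scheme: $\widetilde Sx_i=\sum_ja_{i-2j}x_j$ on $\ell^\infty(\mathbb Z^s,\mathbb R)$; it is convergent if for every bounded $x$ there is a continuous $\widetilde S^\infty x$ with $\sup_j|\widetilde S^\infty x(j/2^n)-(\widetilde S^nx)_j|\to0$. The refinable function is $\varphi=\widetilde S^\infty\delta_0$ (where $\delta_0$ is the sequence equal to $1$ at $0$ and $0$ elsewhere); it is continuous and satisfies $\varphi(t)=\sum_ja_j\varphi(2t-j)$ and $\sum_j\varphi(t-j)=1$. Define $a^{(0)}_i=\delta_{i,0}$, $a^{(n+1)}_i=\sum_ja_{i-2j}a^{(n)}_j$. Characteristic Markov chain: Markov chain $(X_n^{\mathbf a})$ on $\mathbb Z^s$ with $\mathbb P(X_{n+1}=j\mid X_n=i)=a_{i-2j}$ (so $\mathbb P(X_{n+m}=j\mid X_n=i)=a^{(m)}_{i-2^mj}$), realized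 canonically on $\Omega=(\mathbb Z^s)^{\mathbb N_0}$; $\mathbb P_\ell$ is its law started at $\ell$. *)

theory Defs
  imports "HOL-Probability.Probability"
begin

text \<open>Lattice points of Z^s are modelled as int^'s for a finite index type 's;
  points of R^s as real^'s.\<close>

definition lat_pt :: "int^'s \<Rightarrow> real^'s" where
  "lat_pt j = (\<chi> i. real_of_int (j $ i))"

definition is_mask :: "(int^'s \<Rightarrow> real) \<Rightarrow> bool" where
  "is_mask a \<longleftrightarrow> finite {i. a i \<noteq> 0} \<and> (\<forall>i. a i \<ge> 0)
     \<and> (\<forall>i. (\<Sum>\<^sub>\<infinity>j. a (i - 2 * j)) = 1)"

definition lin_scheme :: "(int^'s \<Rightarrow> real) \<Rightarrow> (int^'s \<Rightarrow> real) \<Rightarrow> (int^'s \<Rightarrow> real)" where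
  "lin_scheme a x = (\<lambda>i. \<Sum>\<^sub>\<infinity>j. a (i - 2 * j) * x j)"

definition scheme_limit :: "(int^'s \<Rightarrow> real) \<Rightarrow> (int^'s \<Rightarrow> real) \<Rightarrow> (real^'s \<Rightarrow> real) \<Rightarrow> bool" where
  "scheme_limit a x f \<longleftrightarrow> continuous_on UNIV f \<and>
     (\<forall>\<epsilon>>0. \<forall>\<^sub>F n in sequentially. \<forall>j.
        \<bar>f ((1 / 2 ^ n) *\<^sub>R lat_pt j) - (lin_scheme a ^^ n) x j\<bar> \<le> \<epsilon>)"

definition scheme_convergent :: "(int^'s \<Rightarrow> real) \<Rightarrow> bool" where
  "scheme_convergent a \<longleftrightarrow>
     (\<forall>x. bounded (range x) \<longrightarrow> (\<exists>f. scheme_limit a x f))"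

definition delta0 :: "int^'s \<Rightarrow> real" where
  "delta0 = (\<lambda>j. if j = 0 then 1 else 0)"

definition refinable_fun :: "(int^'s \<Rightarrow> real) \<Rightarrow> (real^'s \<Rightarrow> real) \<Rightarrow> bool" where
  "refinable_fun a \<phi> \<longleftrightarrow> scheme_limit a delta0 \<phi>"

definition interpolatory :: "(real^'s \<Rightarrow> real) \<Rightarrow> bool" where
  "interpolatory \<phi> \<longleftrightarrow> (\<exists>k::int^'s. \<forall>j. \<phi> (lat_pt j) = (if k = j then 1 else 0))"

text \<open>Canonical path space Omega = (Z^s)^N with the product sigma algebra; X_n(\<omega>) = \<omega> n.
  M is the law P_l of the characteristic Markov chain started at l iff it is a
  probability measure on this space with the right finite-dimensional distributions
  (these determine the measure uniquely).\<close>
definition path_space :: "(nat \<Rightarrow> int^'s) measure" where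
  "path_space = PiM UNIV (\<lambda>_. count_space UNIV)"

definition char_chain_law :: "(int^'s \<Rightarrow> real) \<Rightarrow> int^'s \<Rightarrow> (nat \<Rightarrow> int^'s) measure \<Rightarrow> bool" where
  "char_chain_law a l M \<longleftrightarrow> prob_space M \<and> sets M = sets path_space \<and>
     (\<forall>n (i::nat \<Rightarrow> int^'s). measure M {\<omega> \<in> space M. \<forall>k\<le>n. \<omega> k = i k}
        = (if i 0 = l then 1 else 0) * (\<Prod>k<n. a (i k - 2 * i (Suc k))))"

definition Lp_limit :: "(nat \<Rightarrow> int^'s) measure \<Rightarrow> real \<Rightarrow> ((nat \<Rightarrow> int^'s) \<Rightarrow> real^'s) \<Rightarrow> bool" where
  "Lp_limit M p Y \<longleftrightarrow> Y \<in> borel_measurable M \<and>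
     (\<integral>\<^sup>+\<omega>. ennreal (norm (Y \<omega>) powr p) \<partial>M) < \<infinity> \<and>
     (\<forall>n. (\<integral>\<^sup>+\<omega>. ennreal (norm (lat_pt (\<omega> n)) powr p) \<partial>M) < \<infinity>) \<and>
     ((\<lambda>n. \<integral>\<^sup>+\<omega>. ennreal (norm (lat_pt (\<omega> n) - Y \<omega>) powr p) \<partial>M) \<longlonglongrightarrow> 0)"

definition Lp_convergent :: "(nat \<Rightarrow> int^'s) measure \<Rightarrow> real \<Rightarrow> bool" where
  "Lp_convergent M p \<longleftrightarrow> (\<exists>Y. Lp_limit M p Y)"

end

theory Submission
  imports Defs
begin


lemma lat_add: "lat_pt (x + y) = lat_pt x + lat_pt y"
  by (simp add: lat_pt_def vec_eq_iff)
lemma lat_minus: "lat_pt (- x) = - lat_pt x"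
  by (simp add: lat_pt_def vec_eq_iff)
lemma lat_diff: "lat_pt (x - y) = lat_pt x - lat_pt y"
  by (simp add: lat_pt_def vec_eq_iff)
lemma lat_smult: "lat_pt (c *s x) = real_of_int c *\<^sub>R lat_pt x"
  by (simp add: lat_pt_def vec_eq_iff)
lemma two_mult_nth: "((2::int^'s) * x) $ t = 2 * x $ t"
  by simp
lemma lat_dist1: assumes "i \<noteq> j" shows "1 \<le> norm (lat_pt i - lat_pt j)"
proof -
  obtain t where t: "i $ t \<noteq> j $ t" using assms by (auto simp: vec_eq_iff)
  have "1 \<le> \<bar>real_of_int (i$t) - real_of_int (j$t)\<bar>" using t by linarith
  also have "\<dots> = \<bar>(lat_pt i - lat_pt j) $ t\<bar>" by (simp add: lat_pt_def)
  also have "\<dots> \<le> norm (lat_pt i - lat_pt j)" by (rule component_le_norm_cart)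
  finally show ?thesis .
qed

lemma inj_2: "inj (\<lambda>j::int^'s. i - 2 * j)"
  by (auto simp: inj_def vec_eq_iff)

lemma finite_J: assumes "finite {d. a d \<noteq> (0::real)}"
  shows "finite {j::int^'s. a (i - 2 * j) \<noteq> 0}"
proof -
  have "(\<lambda>j. i - 2 * j) ` {j::int^'s. a (i - 2 * j) \<noteq> 0} \<subseteq> {d. a d \<noteq> 0}" by auto
  hence "finite ((\<lambda>j. i - 2 * j) ` {j::int^'s. a (i - 2 * j) \<noteq> 0})" using assms finite_subset by blast
  thus ?thesis using finite_imageD inj_2 by (metis inj_on_subset subset_UNIV)
qed

lemma finite_J': assumes "finite {d. a d \<noteq> (0::real)}"
  shows "finite {j::int^'s. a (j - 2 * c) \<noteq> 0}"
proof -
  have "(\<lambda>j. j - 2 * c) ` {j::int^'s. a (j - 2 * c) \<noteq> 0} \<subseteq> {d. a d \<noteq> 0}" by auto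
  hence "finite ((\<lambda>j. j - 2 * c) ` {j::int^'s. a (j - 2 * c) \<noteq> 0})" using assms finite_subset by blast
  moreover have "inj (\<lambda>j::int^'s. j - 2 * c)" by (auto simp: inj_def)
  ultimately show ?thesis using finite_imageD by (metis inj_on_subset subset_UNIV)
qed

lemma infsum_G:
  fixes f :: "int^'s \<Rightarrow> real"
  assumes "finite G" "\<And>j. a (i - 2 * j) \<noteq> 0 \<Longrightarrow> j \<in> G"
  shows "(\<Sum>\<^sub>\<infinity>j. a (i - 2 * j) * f j) = (\<Sum>j\<in>G. a (i - 2 * j) * f j)"
proof -
  have "(\<Sum>\<^sub>\<infinity>j. a (i - 2 * j) * f j) = (\<Sum>\<^sub>\<infinity>j\<in>G. a (i - 2 * j) * f j)"
    by (rule infsum_cong_neutral) (use assms in auto)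
  also have "\<dots> = (\<Sum>j\<in>G. a (i - 2 * j) * f j)" using assms by simp
  finally show ?thesis .
qed

lemma infsum_G1:
  assumes "finite G" "\<And>j. a (i - 2 * j) \<noteq> 0 \<Longrightarrow> j \<in> G"
  shows "(\<Sum>\<^sub>\<infinity>j. a (i - 2 * j)) = (\<Sum>j\<in>G. a (i - 2 * (j::int^'s)) :: real)"
proof -
  have "(\<Sum>\<^sub>\<infinity>j. a (i - 2 * j)) = (\<Sum>\<^sub>\<infinity>j\<in>G. a (i - 2 * (j::int^'s)) :: real)"
    by (rule infsum_cong_neutral) (use assms in auto)
  then show ?thesis using assms by simp
qed




locale ch =
  fixes a :: "int^'s \<Rightarrow> real" and l :: "int^'s" and M :: "(nat \<Rightarrow> int^'s) measure"
  assumes mask: "is_mask a" and law: "char_chain_law a l M"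
begin

sublocale prob_space M using law by (simp add: char_chain_law_def)

lemma fin_supp: "finite {d. a d \<noteq> 0}" using mask by (simp add: is_mask_def)
lemma a_nn: "0 \<le> a d" using mask by (simp add: is_mask_def)
lemma msum: "(\<Sum>\<^sub>\<infinity>j. a (i - 2 * j)) = 1" using mask by (simp add: is_mask_def)

lemma sets_M: "sets M = sets path_space" using law by (simp add: char_chain_law_def)
lemma space_M: "space M = UNIV"
proof -
  have "space M = space path_space" using sets_M sets_eq_imp_space_eq by blast
  thus ?thesis by (simp add: path_space_def space_PiM PiE_UNIV_domain)
qed

lemma meas_coord[measurable]: "(\<lambda>\<omega>. \<omega> k) \<in> M \<rightarrow>\<^sub>M count_space UNIV"
proof -
  have "(\<lambda>\<omega>. \<omega> k) \<in> path_space \<rightarrow>\<^sub>M count_space UNIV"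
    unfolding path_space_def by (rule measurable_component_singleton) simp
  thus ?thesis using measurable_cong_sets[OF sets_M refl] by blast
qed

lemma cyl: "measure M {\<omega>. \<forall>k\<le>n. \<omega> k = i k}
        = (if i 0 = l then 1 else 0) * (\<Prod>k<n. a (i k - 2 * i (Suc k)))"
  using law space_M by (simp add: char_chain_law_def)

lemma meas_UN:
  assumes "finite G" "\<And>j. B j \<in> sets M" "disjoint_family B"
    "\<And>j. j \<notin> G \<Longrightarrow> measure M (B j) = 0"
  shows "measure M (\<Union>j. B (j::int^'s)) = (\<Sum>j\<in>G. measure M (B j))"
proof -
  have eq: "(\<Union>j. B j) = (\<Union>j\<in>G. B j) \<union> (\<Union>j\<in>-G. B j)" by auto
  have "(\<Union>j\<in>-G. B j) \<in> null_sets M"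
    by (rule null_sets_UN') (use assms in \<open>auto simp: emeasure_eq_measure\<close>)
  hence "measure M (\<Union>j. B j) = measure M (\<Union>j\<in>G. B j)"
    unfolding eq by (intro measure_Un_null_set) (use assms in auto)
  also have "\<dots> = (\<Sum>j\<in>G. measure M (B j))"
    by (rule finite_measure_finite_Union) (use assms in \<open>auto simp: disjoint_family_on_def disjoint_family_subset\<close>)
  finally show ?thesis .
qed

definition q where "q n j = measure M {\<omega>. \<omega> n = j}"

lemma q0: "q 0 j = (if j = l then 1 else 0)"
  using cyl[of 0 "\<lambda>_. j"] by (simp add: q_def)

lemma setM: "Measurable.pred M P \<Longrightarrow> {\<omega>. P \<omega>} \<in> sets M"
proof -
  assume "Measurable.pred M P"
  hence "{\<omega>\<in>space M. P \<omega>} \<in> sets M" by (simp add: pred_def)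
  thus ?thesis by (simp add: space_M)
qed

lemma K1_from:
  assumes Gm: "\<And>i. measure M {\<omega>. \<forall>k. m \<le> k \<and> k \<le> Suc m \<longrightarrow> \<omega> k = i k}
                   = q m (i m) * a (i m - 2 * i (Suc m))"
    and G: "finite G" "\<And>j. a (j - 2 * c) \<noteq> 0 \<Longrightarrow> j \<in> G"
  shows "q (Suc m) c = (\<Sum>j\<in>G. q m j * a (j - 2 * c))"
proof -
  define B where "B j = {\<omega>. \<forall>k. m \<le> k \<and> k \<le> Suc m \<longrightarrow> \<omega> k = ((\<lambda>_. c)(m:=j)) k}" for j
  have mB: "measure M (B j) = q m j * a (j - 2 * c)" for j
    using Gm[of "(\<lambda>_. c)(m:=j)"] unfolding B_def by simp
  have eq: "{\<omega>. \<omega> (Suc m) = c} = (\<Union>j. B j)"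
  proof (intro set_eqI iffI)
    fix \<omega> assume "\<omega> \<in> {\<omega>. \<omega> (Suc m) = c}"
    hence "\<omega> \<in> B (\<omega> m)" unfolding B_def by (auto simp: le_Suc_eq)
    thus "\<omega> \<in> (\<Union>j. B j)" by blast
  next
    fix \<omega> assume "\<omega> \<in> (\<Union>j. B j)"
    thus "\<omega> \<in> {\<omega>. \<omega> (Suc m) = c}" unfolding B_def by auto
  qed
  have "q (Suc m) c = measure M (\<Union>j. B j)" unfolding q_def eq ..
  also have "\<dots> = (\<Sum>j\<in>G. measure M (B j))"
  proof (rule meas_UN)
    show "B j \<in> sets M" for j unfolding B_def by (rule setM) measurable
    show "disjoint_family B" unfolding B_def disjoint_family_on_def by auto
    show "measure M (B j) = 0" if "j \<notin> G" for j using G(2)[of j] that mB by auto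
  qed (use G in auto)
  finally show ?thesis by (simp add: mB)
qed

lemma G:
  "m \<le> n \<Longrightarrow> measure M {\<omega>. \<forall>k. m \<le> k \<and> k \<le> n \<longrightarrow> \<omega> k = i k}
     = q m (i m) * (\<Prod>k\<in>{m..<n}. a (i k - 2 * i (Suc k)))"
proof (induction m arbitrary: n i)
  case 0
  thus ?case using cyl[of n i] by (simp add: q0 lessThan_atLeast0)
next
  case (Suc m)
  have Gm: "measure M {\<omega>. \<forall>k. m \<le> k \<and> k \<le> Suc m \<longrightarrow> \<omega> k = i k}
                   = q m (i m) * a (i m - 2 * i (Suc m))" for i
    using Suc.IH[of "Suc m" i] by simp
  define P where "P = (\<Prod>k\<in>{Suc m..<n}. a (i k - 2 * i (Suc k)))"
  define G where "G = {j. a (j - 2 * i (Suc m)) \<noteq> 0}"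
  have fG: "finite G" unfolding G_def by (rule finite_J'[OF fin_supp])
  define B where "B j = {\<omega>. \<forall>k. m \<le> k \<and> k \<le> n \<longrightarrow> \<omega> k = (i(m:=j)) k}" for j
  have mB: "measure M (B j) = q m j * a (j - 2 * i (Suc m)) * P" for j
  proof -
    have "measure M (B j) = q m j * (\<Prod>k\<in>{m..<n}. a ((i(m:=j)) k - 2 * (i(m:=j)) (Suc k)))"
      unfolding B_def using Suc.IH[of n "i(m:=j)"] Suc.prems by simp
    also have "(\<Prod>k\<in>{m..<n}. a ((i(m:=j)) k - 2 * (i(m:=j)) (Suc k)))
        = a (j - 2 * i (Suc m)) * (\<Prod>k\<in>{Suc m..<n}. a ((i(m:=j)) k - 2 * (i(m:=j)) (Suc k)))"
      using Suc.prems by (subst prod.atLeast_Suc_lessThan) auto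
    also have "(\<Prod>k\<in>{Suc m..<n}. a ((i(m:=j)) k - 2 * (i(m:=j)) (Suc k))) = P"
      unfolding P_def by (rule prod.cong) auto
    finally show ?thesis by simp
  qed
  have eq: "{\<omega>. \<forall>k. Suc m \<le> k \<and> k \<le> n \<longrightarrow> \<omega> k = i k} = (\<Union>j. B j)"
  proof (intro set_eqI iffI)
    fix \<omega> assume a1: "\<omega> \<in> {\<omega>. \<forall>k. Suc m \<le> k \<and> k \<le> n \<longrightarrow> \<omega> k = i k}"
    have "\<omega> \<in> B (\<omega> m)" unfolding B_def
    proof (intro CollectI allI impI)
      fix k assume "m \<le> k \<and> k \<le> n"
      thus "\<omega> k = (i(m := \<omega> m)) k" using a1 by (cases "k = m") auto
    qed
    thus "\<omega> \<in> (\<Union>j. B j)" by blast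
  next
    fix \<omega> assume "\<omega> \<in> (\<Union>j. B j)"
    thus "\<omega> \<in> {\<omega>. \<forall>k. Suc m \<le> k \<and> k \<le> n \<longrightarrow> \<omega> k = i k}" unfolding B_def by auto
  qed
  have "measure M {\<omega>. \<forall>k. Suc m \<le> k \<and> k \<le> n \<longrightarrow> \<omega> k = i k} = measure M (\<Union>j. B j)"
    unfolding eq ..
  also have "\<dots> = (\<Sum>j\<in>G. measure M (B j))"
  proof (rule meas_UN)
    show "B j \<in> sets M" for j unfolding B_def by (rule setM) measurable
    have Bm: "\<omega> \<in> B j \<Longrightarrow> \<omega> m = j" for \<omega> j using Suc.prems unfolding B_def
      by (auto dest!: spec[of _ m])
    show "disjoint_family B" unfolding disjoint_family_on_def using Bm by blast
    show "measure M (B j) = 0" if "j \<notin> G" for j using that mB unfolding G_def by auto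
  qed (use fG in auto)
  also have "\<dots> = (\<Sum>j\<in>G. q m j * a (j - 2 * i (Suc m))) * P"
    by (simp add: mB sum_distrib_right)
  also have "(\<Sum>j\<in>G. q m j * a (j - 2 * i (Suc m))) = q (Suc m) (i (Suc m))"
    by (rule K1_from[OF Gm fG, symmetric]) (auto simp: G_def)
  finally show ?case unfolding P_def .
qed

lemma K1:
  assumes "finite G" "\<And>j. a (j - 2 * c) \<noteq> 0 \<Longrightarrow> j \<in> G"
  shows "q (Suc m) c = (\<Sum>j\<in>G. q m j * a (j - 2 * c))"
  by (rule K1_from[OF _ assms]) (subst G, auto)

lemma K2: "measure M {\<omega>. \<omega> m = i \<and> \<omega> (Suc m) = j} = q m i * a (i - 2 * j)"
proof -
  have "{\<omega>. \<omega> m = i \<and> \<omega> (Suc m) = j} = {\<omega>. \<forall>k. m \<le> k \<and> k \<le> Suc m \<longrightarrow> \<omega> k = ((\<lambda>_. j)(m:=i)) k}"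
    by (auto simp: le_Suc_eq)
  thus ?thesis using G[of m "Suc m" "(\<lambda>_. j)(m:=i)"] by simp
qed

definition B0 :: int where
  "B0 = (\<Sum>t\<in>UNIV. \<bar>l$t\<bar>) + (\<Sum>d\<in>{d. a d \<noteq> 0}. \<Sum>t\<in>UNIV. \<bar>d$t\<bar>)"
definition F :: "(int^'s) set" where "F = {j. \<forall>t. \<bar>j$t\<bar> \<le> B0}"

lemma compB: "\<bar>d$t\<bar> \<le> B0" if "a d \<noteq> 0"
proof -
  have "\<bar>d$t\<bar> \<le> (\<Sum>t\<in>UNIV. \<bar>d$t\<bar>)" by (rule member_le_sum) auto
  also have "\<dots> \<le> (\<Sum>d\<in>{d. a d \<noteq> 0}. \<Sum>t\<in>UNIV. \<bar>d$t\<bar>)"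
    by (rule member_le_sum[where f="\<lambda>d. \<Sum>t\<in>UNIV. \<bar>d$t\<bar>"]) (use that fin_supp in auto)
  also have "\<dots> \<le> B0" unfolding B0_def by (simp add: sum_nonneg)
  finally show ?thesis .
qed

lemma lF: "l \<in> F"
proof -
  have "\<bar>l$t\<bar> \<le> B0" for t
  proof -
    have "\<bar>l$t\<bar> \<le> (\<Sum>t\<in>UNIV. \<bar>l$t\<bar>)" by (rule member_le_sum) auto
    also have "\<dots> \<le> B0" unfolding B0_def by (simp add: sum_nonneg fin_supp)
    finally show ?thesis .
  qed
  thus ?thesis by (simp add: F_def)
qed

lemma closF: "i \<in> F \<Longrightarrow> a (i - 2 * j) \<noteq> 0 \<Longrightarrow> j \<in> F"
proof -
  assume iF: "i \<in> F" and ne: "a (i - 2 * j) \<noteq> 0"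
  have "\<bar>j$t\<bar> \<le> B0" for t
  proof -
    have "\<bar>(i - 2 * j)$t\<bar> \<le> B0" by (rule compB[OF ne])
    moreover have "\<bar>i$t\<bar> \<le> B0" using iF by (simp add: F_def)
    ultimately show ?thesis by simp
  qed
  thus ?thesis by (simp add: F_def)
qed

lemma finF: "finite F"
proof -
  have "F \<subseteq> vec_lambda ` (PiE UNIV (\<lambda>_. {-B0..B0}))"
  proof
    fix j assume "j \<in> F"
    hence "\<bar>j$t\<bar> \<le> B0" for t by (simp add: F_def)
    hence "-B0 \<le> j$t \<and> j$t \<le> B0" for t using abs_le_D1 abs_le_D2 by (metis minus_le_iff)
    hence "vec_nth j \<in> PiE UNIV (\<lambda>_. {-B0..B0})" by auto
    moreover have "j = vec_lambda (vec_nth j)" by simp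
    ultimately show "j \<in> vec_lambda ` (PiE UNIV (\<lambda>_. {-B0..B0}))" by blast
  qed
  moreover have "finite (PiE (UNIV::'s set) (\<lambda>_. {-B0..B0}))" by (rule finite_PiE) auto
  ultimately show ?thesis using finite_subset by blast
qed

lemma suppq: "j \<notin> F \<Longrightarrow> q n j = 0"
proof (induction n arbitrary: j)
  case 0 thus ?case using lF by (auto simp: q0)
next
  case (Suc n)
  have "q (Suc n) j = (\<Sum>i\<in>{i. a (i - 2 * j) \<noteq> 0}. q n i * a (i - 2 * j))"
    by (rule K1) (auto intro: finite_J'[OF fin_supp])
  also have "\<dots> = 0"
  proof (rule sum.neutral, intro ballI)
    fix i assume "i \<in> {i. a (i - 2 * j) \<noteq> 0}"
    hence "i \<notin> F" using closF Suc.prems by blast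
    thus "q n i * a (i - 2 * j) = 0" using Suc.IH by simp
  qed
  finally show ?case .
qed

lemma K1F: "q (Suc n) j = (\<Sum>i\<in>F. q n i * a (i - 2 * j))"
proof -
  have "q (Suc n) j = (\<Sum>i\<in>F \<union> {i. a (i - 2 * j) \<noteq> 0}. q n i * a (i - 2 * j))"
    by (rule K1) (auto intro: finite_J'[OF fin_supp] finF)
  also have "\<dots> = (\<Sum>i\<in>F. q n i * a (i - 2 * j))"
    by (rule sum.mono_neutral_right) (auto intro: finite_J'[OF fin_supp] finF simp: suppq)
  finally show ?thesis .
qed

lemma q_nn: "0 \<le> q n j" by (simp add: q_def)

lemma sumF: "(\<Sum>j\<in>F. q n j) = 1"
proof -
  have "(\<Union>j. {\<omega>. \<omega> n = j}) = UNIV" by auto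
  hence "1 = measure M (\<Union>j. {\<omega>. \<omega> n = j})" using prob_space space_M by metis
  also have "\<dots> = (\<Sum>j\<in>F. measure M {\<omega>. \<omega> n = j})"
  proof (rule meas_UN)
    show "{\<omega>. \<omega> n = j} \<in> sets M" for j by (rule setM) measurable
  qed (auto simp: finF disjoint_family_on_def suppq[unfolded q_def])
  finally show ?thesis by (simp add: q_def)
qed

lemma AE_F: "AE \<omega> in M. \<omega> n \<in> F"
proof -
  have "(\<Union>j\<in>-F. {\<omega>. \<omega> n = j}) \<in> null_sets M"
  proof (rule null_sets_UN')
    fix j assume "j \<in> -F"
    hence "measure M {\<omega>. \<omega> n = j} = 0" using suppq[of j n] by (simp add: q_def)
    moreover have "{\<omega>. \<omega> n = j} \<in> sets M" by (rule setM) measurable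
    ultimately show "{\<omega>. \<omega> n = j} \<in> null_sets M" by (auto simp: null_sets_def emeasure_eq_measure)
  qed simp
  thus ?thesis by (rule AE_I') auto
qed

lemma intF:
  assumes "\<And>j. 0 \<le> g j"
  shows "(\<integral>\<^sup>+\<omega>. ennreal (g (\<omega> n)) \<partial>M) = ennreal (\<Sum>j\<in>F. q n j * g j)"
proof -
  have "(\<integral>\<^sup>+\<omega>. ennreal (g (\<omega> n)) \<partial>M)
      = (\<integral>\<^sup>+\<omega>. (\<Sum>j\<in>F. ennreal (g j) * indicator {\<omega>. \<omega> n = j} \<omega>) \<partial>M)"
  proof (rule nn_integral_cong_AE)
    show "AE \<omega> in M. ennreal (g (\<omega> n)) = (\<Sum>j\<in>F. ennreal (g j) * indicator {\<omega>. \<omega> n = j} \<omega>)"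
      using AE_F[of n]
    proof eventually_elim
      case (elim \<omega>)
      have "(\<Sum>j\<in>F. ennreal (g j) * indicator {\<omega>. \<omega> n = j} \<omega>)
          = (\<Sum>j\<in>F. if j = \<omega> n then ennreal (g (\<omega> n)) else 0)"
        by (rule sum.cong) (auto simp: indicator_def)
      also have "\<dots> = ennreal (g (\<omega> n))" using elim finF by simp
      finally show ?case by simp
    qed
  qed
  also have "\<dots> = (\<Sum>j\<in>F. \<integral>\<^sup>+\<omega>. ennreal (g j) * indicator {\<omega>. \<omega> n = j} \<omega> \<partial>M)"
  proof (rule nn_integral_sum)
    fix j show "(\<lambda>\<omega>. ennreal (g j) * indicator {\<omega>. \<omega> n = j} \<omega>) \<in> borel_measurable M"
      using setM[of "\<lambda>\<omega>. \<omega> n = j"] by measurable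
  qed
  also have "\<dots> = (\<Sum>j\<in>F. ennreal (g j) * emeasure M {\<omega>. \<omega> n = j})"
  proof (rule sum.cong[OF refl], rule nn_integral_cmult_indicator)
    fix j show "{\<omega>. \<omega> n = j} \<in> sets M" by (rule setM) measurable
  qed
  also have "\<dots> = (\<Sum>j\<in>F. ennreal (q n j * g j))"
    by (rule sum.cong) (auto simp: emeasure_eq_measure q_def ennreal_mult'' assms mult.commute)
  also have "\<dots> = ennreal (\<Sum>j\<in>F. q n j * g j)"
    by (rule sum_ennreal) (simp add: q_nn assms)
  finally show ?thesis .
qed

lemma S_F: "i \<in> F \<Longrightarrow> lin_scheme a x i = (\<Sum>j\<in>F. a (i - 2 * j) * x j)"
  unfolding lin_scheme_def by (rule infsum_G) (auto simp: finF closF)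

lemma S1: "(lin_scheme a ^^ n) x l = (\<Sum>j\<in>F. q n j * x j)"
proof (induction n arbitrary: x)
  case 0
  have "(\<Sum>j\<in>F. q 0 j * x j) = (\<Sum>j\<in>F. if j = l then x j else 0)"
    by (rule sum.cong) (auto simp: q0)
  also have "\<dots> = x l" using lF finF by simp
  finally show ?case by simp
next
  case (Suc n)
  have "(lin_scheme a ^^ Suc n) x l = (lin_scheme a ^^ n) (lin_scheme a x) l"
    by (simp only: funpow_Suc_right comp_def)
  also have "\<dots> = (\<Sum>i\<in>F. q n i * lin_scheme a x i)" by (rule Suc.IH)
  also have "\<dots> = (\<Sum>i\<in>F. \<Sum>j\<in>F. q n i * (a (i - 2 * j) * x j))"
    by (simp add: S_F sum_distrib_left)
  also have "\<dots> = (\<Sum>j\<in>F. \<Sum>i\<in>F. q n i * (a (i - 2 * j) * x j))" by (rule sum.swap)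
  also have "\<dots> = (\<Sum>j\<in>F. q (Suc n) j * x j)"
    by (simp add: K1F sum_distrib_right mult.assoc)
  finally show ?case .
qed

end



lemma shiftS: fixes c :: "int^'s" shows "lin_scheme a (\<lambda>m. x (m + c)) i = lin_scheme a x (i + 2 * c)"
proof -
  have bij: "bij_betw (\<lambda>j::int^'s. j + c) UNIV UNIV"
    by (rule bij_betwI[where g="\<lambda>j. j - c"]) auto
  have "lin_scheme a x (i + 2 * c) = (\<Sum>\<^sub>\<infinity>j. (\<lambda>j. a (i + 2 * c - 2 * j) * x j) (j + c))"
    unfolding lin_scheme_def by (rule infsum_reindex_bij_betw[OF bij, symmetric])
  also have "\<dots> = lin_scheme a (\<lambda>m. x (m + c)) i"
    unfolding lin_scheme_def by (simp add: algebra_simps)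
  finally show ?thesis by simp
qed

lemma shiftSn: fixes c :: "int^'s" shows "(lin_scheme a ^^ n) (\<lambda>m. x (m + c)) = (\<lambda>i. (lin_scheme a ^^ n) x (i + (2^n) *s c))"
proof (induction n)
  case 0 show ?case by (simp add: vec_eq_iff)
next
  case (Suc n)
  have e: "i + 2 * ((2::int)^n *s c) = i + (2^Suc n) *s c" for i :: "int^'s"
    by (simp add: vec_eq_iff)
  show ?case by (simp add: Suc shiftS[of a "(lin_scheme a ^^ n) x"] e)
qed

lemma a_le1: fixes a :: "int^'s \<Rightarrow> real" assumes "is_mask a" shows "a d \<le> 1"
proof -
  have fs: "finite {d. a d \<noteq> 0}" and nn: "\<And>d. 0 \<le> a d" using assms by (auto simp: is_mask_def)
  let ?J = "{j::int^'s. a (d - 2 * j) \<noteq> 0}"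
  have fJ: "finite ?J" by (rule finite_J[OF fs])
  have "(\<Sum>j\<in>?J. a (d - 2 * j)) = 1"
    using assms infsum_G1[OF fJ, of a d] by (auto simp: is_mask_def)
  moreover have "a d \<noteq> 0 \<Longrightarrow> a (d - 2 * 0) \<le> (\<Sum>j\<in>?J. a (d - 2 * j))"
    by (rule member_le_sum) (auto simp: nn fJ)
  ultimately show ?thesis by (cases "a d = 0") auto
qed

lemma absorb:
  fixes a :: "int^'s \<Rightarrow> real"
  assumes "is_mask a" "a (- k) = 1"
  shows "lin_scheme a y (2 * i - k) = y i"
proof -
  have fs: "finite {d. a d \<noteq> 0}" and nn: "\<And>d. 0 \<le> a d" using assms by (auto simp: is_mask_def)
  let ?J = "{j::int^'s. a (2 * i - k - 2 * j) \<noteq> 0}"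
  have fJ: "finite ?J" by (rule finite_J[OF fs])
  have iJ: "i \<in> ?J" using assms by simp
  have "(\<Sum>j\<in>?J. a (2 * i - k - 2 * j)) = 1"
    using assms infsum_G1[OF fJ, of a "2 * i - k"] by (auto simp: is_mask_def)
  moreover have "(\<Sum>j\<in>?J. a (2 * i - k - 2 * j)) = a (2 * i - k - 2 * i) + (\<Sum>j\<in>?J - {i}. a (2 * i - k - 2 * j))"
    by (rule sum.remove[OF fJ iJ])
  ultimately have "(\<Sum>j\<in>?J - {i}. a (2 * i - k - 2 * j)) = 0" using assms by simp
  hence z: "\<forall>j\<in>?J - {i}. a (2 * i - k - 2 * j) = 0"
    using sum_nonneg_eq_0_iff[of "?J - {i}" "\<lambda>j. a (2 * i - k - 2 * j)"] fJ nn by simp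
  have "lin_scheme a y (2 * i - k) = (\<Sum>j\<in>?J. a (2 * i - k - 2 * j) * y j)"
    unfolding lin_scheme_def by (rule infsum_G) (auto simp: fJ)
  also have "\<dots> = a (2 * i - k - 2 * i) * y i + (\<Sum>j\<in>?J - {i}. a (2 * i - k - 2 * j) * y j)"
    by (rule sum.remove[OF fJ iJ])
  also have "(\<Sum>j\<in>?J - {i}. a (2 * i - k - 2 * j) * y j) = 0"
    by (rule sum.neutral) (use z in auto)
  finally show ?thesis using assms by simp
qed

lemma absorbn:
  fixes a :: "int^'s \<Rightarrow> real"
  assumes "is_mask a" "a (- k) = 1"
  shows "(lin_scheme a ^^ n) y ((2^n) *s (m - k) + k) = y m"
proof (induction n)
  case 0 show ?case by (simp add: vec_eq_iff)
next
  case (Suc n)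
  have e: "(2^Suc n) *s (m - k) + k = 2 * ((2^n) *s (m - k) + k) - k" by (simp add: vec_eq_iff algebra_simps)
  show ?case unfolding e funpow.simps comp_def absorb[OF assms] by (rule Suc.IH)
qed

lemma scaled_lim: fixes c :: "int^'s" shows "(\<lambda>n. (1 / 2^n) *\<^sub>R lat_pt ((2^n) *s c + d)) \<longlonglongrightarrow> lat_pt c"
proof -
  have e: "(1 / 2^n) *\<^sub>R lat_pt ((2^n) *s c + d) = lat_pt c + (1 / 2^n) *\<^sub>R lat_pt d" for n
    by (simp add: lat_add lat_smult scaleR_add_right)
  have "(\<lambda>n. (1 / 2^n :: real)) \<longlonglongrightarrow> 0" using LIMSEQ_divide_realpow_zero[of 2 1] by simp
  hence "(\<lambda>n. (1 / 2^n) *\<^sub>R lat_pt d) \<longlonglongrightarrow> 0 *\<^sub>R lat_pt d"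
    by (intro tendsto_scaleR tendsto_const)
  hence "(\<lambda>n. lat_pt c + (1 / 2^n) *\<^sub>R lat_pt d) \<longlonglongrightarrow> lat_pt c + 0"
    by (intro tendsto_add tendsto_const) simp
  thus ?thesis unfolding e by simp
qed

locale chphi = ch a l M for a :: "int^'s \<Rightarrow> real" and l M +
  fixes \<phi> :: "real^'s \<Rightarrow> real"
  assumes refin: "refinable_fun a \<phi>"
begin

lemma LIM:
  assumes "(\<lambda>n. (1 / 2^n) *\<^sub>R lat_pt (z n)) \<longlonglongrightarrow> t"
  shows "(\<lambda>n. (lin_scheme a ^^ n) delta0 (z n)) \<longlonglongrightarrow> \<phi> t"
proof -
  have cont: "continuous_on UNIV \<phi>" and unif: "\<And>\<epsilon>. \<epsilon> > 0 \<Longrightarrow> \<forall>\<^sub>F n in sequentially. \<forall>j.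
        \<bar>\<phi> ((1 / 2 ^ n) *\<^sub>R lat_pt j) - (lin_scheme a ^^ n) delta0 j\<bar> \<le> \<epsilon>"
    using refin by (auto simp: refinable_fun_def scheme_limit_def)
  have c1: "(\<lambda>n. \<phi> ((1 / 2^n) *\<^sub>R lat_pt (z n))) \<longlonglongrightarrow> \<phi> t"
    using continuous_on_tendsto_compose[OF cont assms] by (simp add: o_def)
  have c2: "(\<lambda>n. \<phi> ((1 / 2^n) *\<^sub>R lat_pt (z n)) - (lin_scheme a ^^ n) delta0 (z n)) \<longlonglongrightarrow> 0"
  proof (rule tendstoI)
    fix e :: real assume "e > 0"
    hence "\<forall>\<^sub>F n in sequentially. \<forall>j. \<bar>\<phi> ((1 / 2 ^ n) *\<^sub>R lat_pt j) - (lin_scheme a ^^ n) delta0 j\<bar> \<le> e/2"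
      by (intro unif) simp
    thus "\<forall>\<^sub>F n in sequentially. dist (\<phi> ((1 / 2^n) *\<^sub>R lat_pt (z n)) - (lin_scheme a ^^ n) delta0 (z n)) 0 < e"
    proof eventually_elim
      case (elim n)
      hence "\<bar>\<phi> ((1 / 2 ^ n) *\<^sub>R lat_pt (z n)) - (lin_scheme a ^^ n) delta0 (z n)\<bar> \<le> e/2" by blast
      thus ?case using \<open>e > 0\<close> by (simp add: dist_real_def)
    qed
  qed
  have "(\<lambda>n. \<phi> ((1 / 2^n) *\<^sub>R lat_pt (z n)) - (\<phi> ((1 / 2^n) *\<^sub>R lat_pt (z n)) - (lin_scheme a ^^ n) delta0 (z n))) \<longlonglongrightarrow> \<phi> t - 0"
    by (intro tendsto_diff c1 c2)
  thus ?thesis by simp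
qed

lemma qlim: "(\<lambda>n. q n j) \<longlonglongrightarrow> \<phi> (- lat_pt j)"
proof -
  have e: "q n j = (lin_scheme a ^^ n) delta0 ((2^n) *s (- j) + l)" for n
  proof -
    have "(lin_scheme a ^^ n) delta0 ((2^n) *s (- j) + l) = (lin_scheme a ^^ n) (\<lambda>m. delta0 (m + - j)) l"
      by (simp only: shiftSn add.commute)
    also have "\<dots> = (\<Sum>m\<in>F. q n m * delta0 (m + - j))" by (rule S1)
    also have "\<dots> = (\<Sum>m\<in>F. if m = j then q n j else 0)"
      by (rule sum.cong) (auto simp: delta0_def)
    also have "\<dots> = q n j" using finF suppq by auto
    finally show ?thesis by simp
  qed
  show ?thesis unfolding e using LIM[OF scaled_lim[of "-j" l]] by (simp add: lat_minus)
qed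

lemma Huniq: assumes "a (- k1) = 1" "a (- k2) = 1" shows "k1 = k2"
proof (rule ccontr)
  assume ne: "k1 \<noteq> k2"
  have l1: "(\<lambda>n. (lin_scheme a ^^ n) delta0 ((2^n) *s (- k1) + k1)) \<longlonglongrightarrow> \<phi> (lat_pt (- k1))"
    by (rule LIM[OF scaled_lim])
  have v1: "(lin_scheme a ^^ n) delta0 ((2^n) *s (- k1) + k1) = 1" for n
    using absorbn[OF mask assms(1), of n delta0 0] by (simp add: delta0_def)
  have l2: "(\<lambda>n. (lin_scheme a ^^ n) delta0 ((2^n) *s (- k1) + k2)) \<longlonglongrightarrow> \<phi> (lat_pt (- k1))"
    by (rule LIM[OF scaled_lim])
  have v2: "(lin_scheme a ^^ n) delta0 ((2^n) *s (- k1) + k2) = 0" for n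
  proof -
    have "(lin_scheme a ^^ n) delta0 ((2^n) *s ((k2 - k1) - k2) + k2) = delta0 (k2 - k1)"
      by (rule absorbn[OF mask assms(2)])
    thus ?thesis using ne by (simp add: delta0_def)
  qed
  have "(\<lambda>n. 1::real) \<longlonglongrightarrow> \<phi> (lat_pt (- k1))" using l1 unfolding v1 .
  hence "\<phi> (lat_pt (- k1)) = 1" using LIMSEQ_unique[OF tendsto_const] by metis
  moreover have "(\<lambda>n. 0::real) \<longlonglongrightarrow> \<phi> (lat_pt (- k1))" using l2 unfolding v2 .
  hence "\<phi> (lat_pt (- k1)) = 0" using LIMSEQ_unique[OF tendsto_const] by metis
  ultimately show False by simp
qed

end



context chphi
begin

definition mu where "mu j = \<phi> (- lat_pt j)"

lemma mu_nn: "0 \<le> mu j"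
  unfolding mu_def by (rule LIMSEQ_le_const[OF qlim]) (simp add: q_nn)

lemma mu_supp: "j \<notin> F \<Longrightarrow> mu j = 0"
proof -
  assume "j \<notin> F"
  hence "(\<lambda>n. q n j) \<longlonglongrightarrow> 0" by (simp add: suppq)
  thus ?thesis unfolding mu_def using LIMSEQ_unique[OF qlim] by blast
qed

lemma sum_lim:
  assumes "\<And>j. (\<lambda>n. f n j) \<longlonglongrightarrow> g j"
  shows "(\<lambda>n. \<Sum>j\<in>F. f n j) \<longlonglongrightarrow> (\<Sum>j\<in>F. g j :: real)"
  by (rule tendsto_sum) (rule assms)

lemma mu_sum: "(\<Sum>j\<in>F. mu j) = 1"
proof -
  have "(\<lambda>n. \<Sum>j\<in>F. q n j) \<longlonglongrightarrow> (\<Sum>j\<in>F. mu j)"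
    by (rule sum_lim) (simp add: mu_def qlim)
  hence "(\<lambda>n. 1::real) \<longlonglongrightarrow> (\<Sum>j\<in>F. mu j)" unfolding sumF .
  thus ?thesis using LIMSEQ_unique[OF tendsto_const] by metis
qed

lemma meas_lat[measurable]: "(\<lambda>\<omega>. lat_pt (\<omega> n)) \<in> borel_measurable M"
  by (rule measurable_compose[OF meas_coord]) simp

lemma markov:
  assumes Y: "Y \<in> borel_measurable M" and e: "e > 0" and p: "p \<ge> 1"
  shows "emeasure M {\<omega>. e \<le> norm (lat_pt (\<omega> n) - Y \<omega>)}
     \<le> ennreal ((1/e) powr p) * (\<integral>\<^sup>+\<omega>. ennreal (norm (lat_pt (\<omega> n) - Y \<omega>) powr p) \<partial>M)"
proof -
  let ?u = "\<lambda>\<omega>. ennreal (norm (lat_pt (\<omega> n) - Y \<omega>) powr p)"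
  have um: "(\<lambda>x. ?u x * indicator (space M) x) \<in> borel_measurable M" using Y by measurable
  have "{\<omega>. e \<le> norm (lat_pt (\<omega> n) - Y \<omega>)} \<subseteq> {x\<in>space M. 1 \<le> ennreal ((1/e) powr p) * ?u x}"
  proof safe
    fix \<omega> assume h: "e \<le> norm (lat_pt (\<omega> n) - Y \<omega>)"
    have "1 \<le> (1/e) * norm (lat_pt (\<omega> n) - Y \<omega>)" using h e by (simp add: field_simps)
    hence "1 \<le> ((1/e) * norm (lat_pt (\<omega> n) - Y \<omega>)) powr p" using p by (intro ge_one_powr_ge_zero) auto
    also have "\<dots> = (1/e) powr p * norm (lat_pt (\<omega> n) - Y \<omega>) powr p"
      by (rule powr_mult)
    finally have fin: "ennreal 1 \<le> ennreal ((1/e) powr p * norm (lat_pt (\<omega> n) - Y \<omega>) powr p)"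
      by (rule ennreal_leI)
    have eq: "ennreal ((1/e) powr p) * ?u \<omega> = ennreal ((1/e) powr p * norm (lat_pt (\<omega> n) - Y \<omega>) powr p)"
      by (rule ennreal_mult''[symmetric]) simp
    show "1 \<le> ennreal ((1/e) powr p) * ?u \<omega>" unfolding eq using fin by (simp only: ennreal_1)
  qed (simp add: space_M)
  hence "emeasure M {\<omega>. e \<le> norm (lat_pt (\<omega> n) - Y \<omega>)} \<le> emeasure M {x\<in>space M. 1 \<le> ennreal ((1/e) powr p) * ?u x}"
  proof (rule emeasure_mono)
    have fm: "(\<lambda>x. ennreal ((1/e) powr p) * ?u x) \<in> borel_measurable M" using Y by measurable
    have s1: "(\<lambda>x. ennreal ((1/e) powr p) * ?u x) -` {1..} \<inter> space M \<in> sets M"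
      by (rule measurable_sets[OF fm]) (rule borel_closed, rule closed_atLeast)
    have s2: "(\<lambda>x. ennreal ((1/e) powr p) * ?u x) -` {1..} \<inter> space M
       = {x\<in>space M. 1 \<le> ennreal ((1/e) powr p) * ?u x}" by auto
    show "{x\<in>space M. 1 \<le> ennreal ((1/e) powr p) * ?u x} \<in> sets M" using s1 unfolding s2 .
  qed
  also have "\<dots> \<le> ennreal ((1/e) powr p) * (\<integral>\<^sup>+ x. ?u x * indicator (space M) x \<partial>M)"
    by (rule nn_integral_Markov_inequality[OF um]) simp
  also have "(\<integral>\<^sup>+ x. ?u x * indicator (space M) x \<partial>M) = (\<integral>\<^sup>+ x. ?u x \<partial>M)"
    by (rule nn_integral_cong) simp
  finally show ?thesis .
qed

end



context chphi
begin

lemma dir_interp: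
  assumes "interpolatory \<phi>" "1 \<le> p"
  shows "Lp_convergent M p"
proof -
  obtain k where hk: "\<And>j. \<phi> (lat_pt j) = (if k = j then 1 else 0)"
    using assms(1) unfolding interpolatory_def by blast
  define c where "c = - k"
  have mu_eq: "mu j = (if j = c then 1 else 0)" for j
    unfolding mu_def c_def using hk[of "- j"] by (auto simp: lat_minus)
  define g where "g j = norm (lat_pt j - lat_pt c) powr p" for j
  have gnn: "0 \<le> g j" for j by (simp add: g_def)
  have "Lp_limit M p (\<lambda>_. lat_pt c)"
    unfolding Lp_limit_def
  proof (intro conjI allI)
    show "(\<lambda>_. lat_pt c) \<in> borel_measurable M" by simp
    show "(\<integral>\<^sup>+\<omega>. ennreal (norm (lat_pt c) powr p) \<partial>M) < \<infinity>"
      by (simp add: emeasure_space_1)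
    fix n
    show "(\<integral>\<^sup>+\<omega>. ennreal (norm (lat_pt (\<omega> n)) powr p) \<partial>M) < \<infinity>"
      using intF[of "\<lambda>j. norm (lat_pt j) powr p" n] by simp
  next
    have e: "(\<integral>\<^sup>+\<omega>. ennreal (norm (lat_pt (\<omega> n) - lat_pt c) powr p) \<partial>M)
        = ennreal (\<Sum>j\<in>F. q n j * g j)" for n
      using intF[of g n] gnn unfolding g_def by simp
    have "(\<lambda>n. \<Sum>j\<in>F. q n j * g j) \<longlonglongrightarrow> (\<Sum>j\<in>F. mu j * g j)"
      by (rule sum_lim, rule tendsto_mult_right) (simp add: mu_def qlim)
    moreover have "(\<Sum>j\<in>F. mu j * g j) = 0"
      by (rule sum.neutral) (auto simp: mu_eq g_def)
    ultimately have "(\<lambda>n. ennreal (\<Sum>j\<in>F. q n j * g j)) \<longlonglongrightarrow> ennreal 0"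
      by (intro tendsto_ennrealI) simp
    thus "(\<lambda>n. \<integral>\<^sup>+\<omega>. ennreal (norm (lat_pt (\<omega> n) - lat_pt c) powr p) \<partial>M) \<longlonglongrightarrow> 0"
      unfolding e by simp
  qed
  thus ?thesis unfolding Lp_convergent_def by blast
qed

lemma nullF: "{\<omega>. \<omega> n \<notin> F} \<in> null_sets M"
proof -
  have "(\<Union>j\<in>-F. {\<omega>. \<omega> n = j}) \<in> null_sets M"
  proof (rule null_sets_UN')
    fix j assume "j \<in> -F"
    hence "measure M {\<omega>. \<omega> n = j} = 0" using suppq[of j n] by (simp add: q_def)
    moreover have "{\<omega>. \<omega> n = j} \<in> sets M" by (rule setM) measurable
    ultimately show "{\<omega>. \<omega> n = j} \<in> null_sets M" by (auto simp: null_sets_def emeasure_eq_measure)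
  qed simp
  moreover have "(\<Union>j\<in>-F. {\<omega>. \<omega> n = j}) = {\<omega>. \<omega> n \<notin> F}" by auto
  ultimately show ?thesis by simp
qed

lemma Eset: "Y \<in> borel_measurable M \<Longrightarrow> {\<omega>. e \<le> norm (lat_pt (\<omega> n) - Y \<omega>)} \<in> sets M"
  by (rule setM) measurable

lemma dir_Lp:
  assumes L: "Lp_limit M p Y" and p: "1 \<le> p"
  shows "interpolatory \<phi> \<and> (\<exists>c. AE \<omega> in M. Y \<omega> = lat_pt c)"
proof -
  define I where "I n = (\<integral>\<^sup>+\<omega>. ennreal (norm (lat_pt (\<omega> n) - Y \<omega>) powr p) \<partial>M)" for n
  have Ym[measurable]: "Y \<in> borel_measurable M" using L by (simp add: Lp_limit_def)
  have IL: "I \<longlonglongrightarrow> 0" using L unfolding Lp_limit_def I_def by blast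
  define D where "D n = {\<omega>::nat \<Rightarrow> int^'s. \<omega> n \<noteq> \<omega> (Suc n)}" for n
  have Dsets: "D n \<in> sets M" for n unfolding D_def by (rule setM) measurable
  have Dlim: "(\<lambda>n. measure M (D n)) \<longlonglongrightarrow> 0"
  proof -
    define c where "c = ennreal ((1 / (1/2)) powr p)"
    have bnd: "emeasure M (D n) \<le> c * I n + c * I (Suc n)" for n
    proof -
      have "D n \<subseteq> {\<omega>. 1/2 \<le> norm (lat_pt (\<omega> n) - Y \<omega>)} \<union> {\<omega>. 1/2 \<le> norm (lat_pt (\<omega> (Suc n)) - Y \<omega>)}"
      proof
        fix \<omega> assume "\<omega> \<in> D n"
        hence "1 \<le> norm (lat_pt (\<omega> n) - lat_pt (\<omega> (Suc n)))" unfolding D_def by (intro lat_dist1) simp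
        also have "\<dots> = norm ((lat_pt (\<omega> n) - Y \<omega>) - (lat_pt (\<omega> (Suc n)) - Y \<omega>))" by simp
        also have "\<dots> \<le> norm (lat_pt (\<omega> n) - Y \<omega>) + norm (lat_pt (\<omega> (Suc n)) - Y \<omega>)"
          by (rule norm_triangle_ineq4)
        finally show "\<omega> \<in> {\<omega>. 1/2 \<le> norm (lat_pt (\<omega> n) - Y \<omega>)} \<union> {\<omega>. 1/2 \<le> norm (lat_pt (\<omega> (Suc n)) - Y \<omega>)}"
          by auto
      qed
      hence "emeasure M (D n) \<le> emeasure M ({\<omega>. 1/2 \<le> norm (lat_pt (\<omega> n) - Y \<omega>)} \<union> {\<omega>. 1/2 \<le> norm (lat_pt (\<omega> (Suc n)) - Y \<omega>)})"
        by (rule emeasure_mono) (intro sets.Un Eset Ym)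
      also have "\<dots> \<le> emeasure M {\<omega>. 1/2 \<le> norm (lat_pt (\<omega> n) - Y \<omega>)} + emeasure M {\<omega>. 1/2 \<le> norm (lat_pt (\<omega> (Suc n)) - Y \<omega>)}"
        by (rule emeasure_subadditive) (intro Eset Ym)+
      also have "\<dots> \<le> c * I n + c * I (Suc n)"
        unfolding c_def I_def by (intro add_mono markov Ym p) auto
      finally show ?thesis .
    qed
    have "(\<lambda>n. c * I n + c * I (Suc n)) \<longlonglongrightarrow> c * 0 + c * 0"
      by (intro tendsto_add ennreal_tendsto_cmult IL LIMSEQ_Suc[OF IL]) (auto simp: c_def)
    hence R: "(\<lambda>n. c * I n + c * I (Suc n)) \<longlonglongrightarrow> 0" by simp
    have "(\<lambda>n. emeasure M (D n)) \<longlonglongrightarrow> 0"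
      by (rule tendsto_sandwich[OF _ _ tendsto_const R]) (auto intro!: always_eventually bnd)
    hence "(\<lambda>n. ennreal (measure M (D n))) \<longlonglongrightarrow> ennreal 0" by (simp add: emeasure_eq_measure)
    thus ?thesis by (subst (asm) tendsto_ennreal_iff) auto
  qed
  have lower: "1 - measure M (D n) \<le> (\<Sum>j\<in>F. q n j * a (- j))" for n
  proof -
    have "space M - D n = {\<omega>. \<omega> n = \<omega> (Suc n)}" by (auto simp: space_M D_def)
    hence "1 - measure M (D n) = measure M {\<omega>. \<omega> n = \<omega> (Suc n)}"
      using prob_compl[OF Dsets[of n]] by simp
    also have "\<dots> \<le> measure M ((\<Union>j\<in>F. {\<omega>. \<omega> n = j \<and> \<omega> (Suc n) = j}) \<union> {\<omega>. \<omega> n \<notin> F})"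
    proof (rule finite_measure_mono)
      show "{\<omega>. \<omega> n = \<omega> (Suc n)} \<subseteq> (\<Union>j\<in>F. {\<omega>. \<omega> n = j \<and> \<omega> (Suc n) = j}) \<union> {\<omega>. \<omega> n \<notin> F}"
        by auto
      have "(\<Union>j\<in>F. {\<omega>. \<omega> n = j \<and> \<omega> (Suc n) = j}) \<in> sets M"
        by (intro sets.finite_UN finF setM) measurable
      moreover have "{\<omega>. \<omega> n \<notin> F} \<in> sets M" using nullF by auto
      ultimately show "(\<Union>j\<in>F. {\<omega>. \<omega> n = j \<and> \<omega> (Suc n) = j}) \<union> {\<omega>. \<omega> n \<notin> F} \<in> sets M" by auto
    qed
    also have "\<dots> = measure M (\<Union>j\<in>F. {\<omega>. \<omega> n = j \<and> \<omega> (Suc n) = j})"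
    proof (rule measure_Un_null_set[OF _ nullF])
      show "(\<Union>j\<in>F. {\<omega>. \<omega> n = j \<and> \<omega> (Suc n) = j}) \<in> sets M"
        by (intro sets.finite_UN finF setM) measurable
    qed
    also have "\<dots> = (\<Sum>j\<in>F. measure M {\<omega>. \<omega> n = j \<and> \<omega> (Suc n) = j})"
    proof (rule finite_measure_finite_Union)
      show "(\<lambda>j. {\<omega>. \<omega> n = j \<and> \<omega> (Suc n) = j}) ` F \<subseteq> sets M"
        by (auto intro!: setM)
      show "disjoint_family_on (\<lambda>j. {\<omega>. \<omega> n = j \<and> \<omega> (Suc n) = j}) F"
        by (auto simp: disjoint_family_on_def)
    qed (rule finF)
    also have "\<dots> = (\<Sum>j\<in>F. q n j * a (- j))"
    proof (rule sum.cong[OF refl])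
      fix j :: "int^'s"
      have "j - 2 * j = - j" by (simp add: vec_eq_iff)
      thus "measure M {\<omega>. \<omega> n = j \<and> \<omega> (Suc n) = j} = q n j * a (- j)" by (simp add: K2)
    qed
    finally show ?thesis .
  qed
  have "(\<lambda>n. 1 - measure M (D n)) \<longlonglongrightarrow> 1 - 0" by (intro tendsto_diff tendsto_const Dlim)
  moreover have "(\<lambda>n. \<Sum>j\<in>F. q n j * a (- j)) \<longlonglongrightarrow> (\<Sum>j\<in>F. mu j * a (- j))"
    by (rule sum_lim, rule tendsto_mult_right) (simp add: mu_def qlim)
  ultimately have ge1: "1 \<le> (\<Sum>j\<in>F. mu j * a (- j))"
    using lower by (intro LIMSEQ_le) auto
  have "(\<Sum>j\<in>F. mu j * (1 - a (- j))) = (\<Sum>j\<in>F. mu j) - (\<Sum>j\<in>F. mu j * a (- j))"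
    by (simp add: algebra_simps sum_subtractf)
  hence "(\<Sum>j\<in>F. mu j * (1 - a (- j))) \<le> 0" using ge1 mu_sum by simp
  moreover have nn: "\<forall>j\<in>F. 0 \<le> mu j * (1 - a (- j))"
    using mu_nn a_le1[OF mask] by simp
  ultimately have "(\<Sum>j\<in>F. mu j * (1 - a (- j))) = 0"
    using sum_nonneg[of F "\<lambda>j. mu j * (1 - a (- j))"] by simp
  hence z: "\<forall>j\<in>F. mu j * (1 - a (- j)) = 0"
    using sum_nonneg_eq_0_iff[OF finF, of "\<lambda>j. mu j * (1 - a (- j))"] nn by simp
  have abs1: "a (- j) = 1" if "mu j \<noteq> 0" for j
  proof -
    have "j \<in> F" using that mu_supp by blast
    thus ?thesis using z that by auto
  qed
  obtain k where kF: "k \<in> F" and mk: "mu k \<noteq> 0"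
  proof -
    have "\<not> (\<forall>j\<in>F. mu j = 0)"
    proof
      assume "\<forall>j\<in>F. mu j = 0"
      hence "(\<Sum>j\<in>F. mu j) = 0" by simp
      thus False using mu_sum by simp
    qed
    thus ?thesis using that by blast
  qed
  have onlyk: "mu j = 0" if "j \<noteq> k" for j
    using Huniq[OF abs1[OF mk]] abs1 that by blast
  have "(\<Sum>j\<in>F. mu j) = (\<Sum>j\<in>F. if j = k then mu k else 0)"
    by (rule sum.cong) (auto simp: onlyk)
  also have "\<dots> = mu k" using kF finF by simp
  finally have mk1: "mu k = 1" using mu_sum by simp
  have mu_eq: "mu j = (if j = k then 1 else 0)" for j using onlyk mk1 by auto
  have interp: "interpolatory \<phi>"
    unfolding interpolatory_def
  proof (intro exI allI)
    fix j
    have "\<phi> (lat_pt j) = mu (- j)" by (simp add: mu_def lat_minus)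
    thus "\<phi> (lat_pt j) = (if - k = j then 1 else 0)" by (auto simp: mu_eq)
  qed
  have qk: "(\<lambda>n. q n k) \<longlonglongrightarrow> 1" using qlim[of k] mk1 by (simp add: mu_def)
  define E' where "E' e = {\<omega>. e \<le> norm (Y \<omega> - lat_pt k)}" for e
  have E'sets: "E' e \<in> sets M" for e unfolding E'_def by (rule setM) measurable
  have E'0: "emeasure M (E' e) = 0" if e: "e > 0" for e
  proof -
    define c where "c = ennreal ((1/e) powr p)"
    have bnd: "emeasure M (E' e) \<le> ennreal (1 - q n k) + c * I n" for n
    proof -
      have s1: "{\<omega>. \<omega> n \<noteq> k} \<in> sets M" by (rule setM) measurable
      have "E' e \<subseteq> {\<omega>. \<omega> n \<noteq> k} \<union> {\<omega>. e \<le> norm (lat_pt (\<omega> n) - Y \<omega>)}"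
        unfolding E'_def by (auto simp: norm_minus_commute)
      hence "emeasure M (E' e) \<le> emeasure M ({\<omega>. \<omega> n \<noteq> k} \<union> {\<omega>. e \<le> norm (lat_pt (\<omega> n) - Y \<omega>)})"
        by (rule emeasure_mono) (intro sets.Un Eset Ym s1)
      also have "\<dots> \<le> emeasure M {\<omega>. \<omega> n \<noteq> k} + emeasure M {\<omega>. e \<le> norm (lat_pt (\<omega> n) - Y \<omega>)}"
        by (rule emeasure_subadditive) (intro Eset Ym s1)+
      also have "emeasure M {\<omega>. \<omega> n \<noteq> k} = ennreal (1 - q n k)"
      proof -
        have s2: "{\<omega>. \<omega> n = k} \<in> sets M" by (rule setM) measurable
        have "space M - {\<omega>. \<omega> n = k} = {\<omega>. \<omega> n \<noteq> k}" by (auto simp: space_M)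
        hence "measure M {\<omega>. \<omega> n \<noteq> k} = 1 - q n k" using prob_compl[OF s2] by (simp add: q_def)
        thus ?thesis by (simp add: emeasure_eq_measure)
      qed
      also have "emeasure M {\<omega>. e \<le> norm (lat_pt (\<omega> n) - Y \<omega>)} \<le> c * I n"
        unfolding c_def I_def by (rule markov[OF Ym e p])
      finally show ?thesis by simp
    qed
    have "(\<lambda>n. ennreal (1 - q n k)) \<longlonglongrightarrow> ennreal (1 - 1)"
      by (intro tendsto_ennrealI tendsto_diff tendsto_const qk)
    hence "(\<lambda>n. ennreal (1 - q n k) + c * I n) \<longlonglongrightarrow> ennreal (1 - 1) + c * 0"
      by (intro tendsto_add ennreal_tendsto_cmult IL) (auto simp: c_def)
    hence "(\<lambda>n. ennreal (1 - q n k) + c * I n) \<longlonglongrightarrow> 0" by simp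
    hence "emeasure M (E' e) \<le> 0" by (rule LIMSEQ_le[OF tendsto_const]) (auto intro: bnd)
    thus ?thesis by simp
  qed
  have "(\<Union>m. E' (1 / Suc m)) \<in> null_sets M"
    by (rule null_sets_UN) (auto simp: E'sets E'0 null_sets_def)
  moreover have "{\<omega>\<in>space M. \<not> Y \<omega> = lat_pt k} \<subseteq> (\<Union>m. E' (1 / Suc m))"
  proof
    fix \<omega> assume "\<omega> \<in> {\<omega>\<in>space M. \<not> Y \<omega> = lat_pt k}"
    hence pos: "0 < norm (Y \<omega> - lat_pt k)" by simp
    obtain m where "m > 0" "inverse (real m) < norm (Y \<omega> - lat_pt k)"
      using ex_inverse_of_nat_less[OF pos] by blast
    hence "1 / real (Suc (m - 1)) \<le> norm (Y \<omega> - lat_pt k)"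
      by (simp add: inverse_eq_divide)
    thus "\<omega> \<in> (\<Union>m. E' (1 / Suc m))" unfolding E'_def by blast
  qed
  ultimately have "AE \<omega> in M. Y \<omega> = lat_pt k" by (rule AE_I')
  thus ?thesis using interp by blast
qed

end


theorem mainTheorem11:
  fixes a :: "int^'s \<Rightarrow> real" and \<phi> :: "real^'s \<Rightarrow> real"
    and p :: real and l :: "int^'s" and M :: "(nat \<Rightarrow> int^'s) measure"
  assumes "is_mask a" and "scheme_convergent a" and "refinable_fun a \<phi>"
    and "1 \<le> p" and "char_chain_law a l M"
  shows "(Lp_convergent M p \<longleftrightarrow> interpolatory \<phi>) \<and>
         (\<forall>Y. Lp_limit M p Y \<longrightarrow> (\<exists>c::int^'s. AE \<omega> in M. Y \<omega> = lat_pt c))"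
proof -
  interpret chphi a l M \<phi>
    using assms(1,3,5) by (simp add: chphi_def ch_def chphi_axioms_def)
  have "Lp_convergent M p \<longleftrightarrow> interpolatory \<phi>"
  proof
    assume "Lp_convergent M p"
    then obtain Y where "Lp_limit M p Y" unfolding Lp_convergent_def by blast
    thus "interpolatory \<phi>" using dir_Lp assms(4) by blast
  next
    assume "interpolatory \<phi>"
    thus "Lp_convergent M p" using dir_interp assms(4) by blast
  qed
  moreover have "\<forall>Y. Lp_limit M p Y \<longrightarrow> (\<exists>c::int^'s. AE \<omega> in M. Y \<omega> = lat_pt c)"
    using dir_Lp assms(4) by blast
  ultimately show ?thesis by blast
qed

end
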